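(* Let $X$ be a shift space over a finite alphabet. If $X$ is balanced, then $X$ is boundedly supermultiplicative.
   Context: For a shift space $X\subseteq\mathcal{A}^{\mathbb{Z}}$ ($\mathcal{A}$ finite), $\mathcal{B}_n(X)$ denotes the set of words of length $n$ appearing in points of $X$, and $\mathcal{B}(X)=\bigcup_{n\ge1}\mathcal{B}_n(X)$. For $\omega\in\mathcal{B}(X)$ and $r\in\mathbb{N}$, $\mathcal{B}_{\omega,r}(X)$ is the set of words $u$ of length $r$ such that $\omega u\in\mathcal{B}(X)$. $X$ is boundedly supermultiplicative (BSM) if there is $K\ge1$ with $|\mathcal{B}_m(X)|\cdot|\mathcal{B}_n(X)|\le K|\mathcal{B}_{m+n}(X)|$ for all $m,n\ge1$. $X$ is balanced if there is $B>0$ such that $|\mathcal{B}_{\omega,r}(X)|/|\mathcal{B}_r(X)|\ge B$ for every $\omega\in\mathcal{B}(X)$ and every $r\in\mathbb{N}$. *)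

theory Defs
  imports "HOL-Analysis.Analysis"
begin

definition shift_map :: "(int \<Rightarrow> 'a) \<Rightarrow> (int \<Rightarrow> 'a)" where
  "shift_map x = (\<lambda>i. x (i + 1))"

definition shift_space :: "(int \<Rightarrow> 'a::finite) set \<Rightarrow> bool" where
  "shift_space X \<longleftrightarrow>
     closedin (product_topology (\<lambda>_::int. discrete_topology (UNIV::'a set)) UNIV) X
     \<and> shift_map ` X = X"

definition word_at :: "(int \<Rightarrow> 'a) \<Rightarrow> int \<Rightarrow> nat \<Rightarrow> 'a list" where
  "word_at x i n = map (\<lambda>k. x (i + int k)) [0..<n]"

definition lang_n :: "(int \<Rightarrow> 'a) set \<Rightarrow> nat \<Rightarrow> 'a list set" where
  "lang_n X n = {w. \<exists>x\<in>X. \<exists>i. w = word_at x i n}"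

definition lang :: "(int \<Rightarrow> 'a) set \<Rightarrow> 'a list set" where
  "lang X = (\<Union>n\<in>{1..}. lang_n X n)"

definition follower_words :: "(int \<Rightarrow> 'a) set \<Rightarrow> 'a list \<Rightarrow> nat \<Rightarrow> 'a list set" where
  "follower_words X w r = {u. length u = r \<and> w @ u \<in> lang X}"

definition BSM :: "(int \<Rightarrow> 'a) set \<Rightarrow> bool" where
  "BSM X \<longleftrightarrow> (\<exists>K::real. K \<ge> 1 \<and> (\<forall>m n. m \<ge> 1 \<longrightarrow> n \<ge> 1 \<longrightarrow>
      real (card (lang_n X m)) * real (card (lang_n X n)) \<le> K * real (card (lang_n X (m + n)))))"

definition balanced :: "(int \<Rightarrow> 'a) set \<Rightarrow> bool" where
  "balanced X \<longleftrightarrow> (\<exists>B::real. B > 0 \<and> (\<forall>w\<in>lang X. \<forall>r. r \<ge> 1 \<longrightarrow>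
      real (card (follower_words X w r)) / real (card (lang_n X r)) \<ge> B))"

end

theory Submission
  imports Defs
begin

lemma len_word_at[simp]: "length (word_at x i n) = n"
  by (simp add: word_at_def)

lemma lang_n_len: "w \<in> lang_n X n \<Longrightarrow> length w = n"
  by (auto simp: lang_n_def)

lemma finite_lang_n: "finite (lang_n (X :: (int \<Rightarrow> 'a::finite) set) n)"
proof -
  have "lang_n X n \<subseteq> {xs. set xs \<subseteq> (UNIV::'a set) \<and> length xs = n}"
    by (auto simp: lang_n_len)
  moreover have "finite {xs. set xs \<subseteq> (UNIV::'a set) \<and> length xs = n}"
    by (rule finite_lists_length_eq) simp
  ultimately show ?thesis by (rule finite_subset)
qed

lemma lang_n_in_lang: "w \<in> lang_n X m \<Longrightarrow> m \<ge> 1 \<Longrightarrow> w \<in> lang X"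
  by (auto simp: lang_def)

lemma lang_in_lang_n: "w \<in> lang X \<Longrightarrow> w \<in> lang_n X (length w)"
proof -
  assume "w \<in> lang X"
  then obtain k where "w \<in> lang_n X k" by (auto simp: lang_def)
  moreover then have "length w = k" by (rule lang_n_len)
  ultimately show ?thesis by simp
qed

theorem proposition3p6:
  fixes X :: "(int \<Rightarrow> 'a::finite) set"
  assumes "shift_space X"
    and "balanced X"
  shows "BSM X"
proof -
  obtain B :: real where B0: "B > 0" and HB: "\<And>w r. w \<in> lang X \<Longrightarrow> r \<ge> 1 \<Longrightarrow>
      real (card (follower_words X w r)) / real (card (lang_n X r)) \<ge> B"
    using assms(2) unfolding balanced_def by blast
  define K where "K = max 1 (1/B)"
  have K1: "K \<ge> 1" by (simp add: K_def)
  have KB: "K * B \<ge> 1" using B0 by (simp add: K_def field_simps max_def)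
  show ?thesis unfolding BSM_def
  proof (intro exI[of _ K] conjI allI impI K1)
    fix m n :: nat assume m: "m \<ge> 1" and n: "n \<ge> 1"
    let ?L = "lang_n X m" and ?F = "\<lambda>w. follower_words X w n"
    have finF: "finite (?F w)" for w
    proof -
      have "?F w \<subseteq> {xs. set xs \<subseteq> (UNIV::'a set) \<and> length xs = n}"
        by (auto simp: follower_words_def)
      moreover have "finite {xs. set xs \<subseteq> (UNIV::'a set) \<and> length xs = n}"
        by (rule finite_lists_length_eq) simp
      ultimately show ?thesis by (rule finite_subset)
    qed
    have inj: "inj_on (\<lambda>(w,u). w @ u) (Sigma ?L ?F)"
      by (auto simp: inj_on_def lang_n_len)
    have img: "(\<lambda>(w,u). w @ u) ` Sigma ?L ?F \<subseteq> lang_n X (m+n)"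
    proof clarify
      fix w u assume w: "w \<in> ?L" and u: "u \<in> ?F w"
      then have "w @ u \<in> lang X" "length u = n" by (auto simp: follower_words_def)
      moreover have "length w = m" using w lang_n_len by blast
      ultimately show "w @ u \<in> lang_n X (m+n)" using lang_in_lang_n by fastforce
    qed
    have "card (Sigma ?L ?F) \<le> card (lang_n X (m+n))"
      using card_inj_on_le[OF inj img finite_lang_n] .
    moreover have "card (Sigma ?L ?F) = (\<Sum>w\<in>?L. card (?F w))"
      using finF by (simp add: finite_lang_n)
    ultimately have S: "(\<Sum>w\<in>?L. real (card (?F w))) \<le> real (card (lang_n X (m+n)))"
      by (metis of_nat_le_iff of_nat_sum)
    have each: "B * real (card (lang_n X n)) \<le> real (card (?F w))" if "w \<in> ?L" for w
    proof (cases "card (lang_n X n) = 0")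
      case True then show ?thesis by simp
    next
      case False
      have "B \<le> real (card (?F w)) / real (card (lang_n X n))"
        using HB[OF lang_n_in_lang[OF that m] n] .
      then show ?thesis using False by (simp add: field_simps)
    qed
    have "real (card ?L) * (B * real (card (lang_n X n))) \<le> (\<Sum>w\<in>?L. real (card (?F w)))"
      using sum_mono[of ?L "\<lambda>_. B * real (card (lang_n X n))", OF each] by simp
    with S have T: "B * (real (card ?L) * real (card (lang_n X n))) \<le> real (card (lang_n X (m+n)))"
      by (simp add: algebra_simps)
    have "real (card ?L) * real (card (lang_n X n)) \<le> K * B * (real (card ?L) * real (card (lang_n X n)))"
      proof -
      have "0 \<le> real (card ?L) * real (card (lang_n X n))" by simp
      then show ?thesis using KB mult_right_mono[OF KB] by simp
    qed
    also have "\<dots> \<le> K * real (card (lang_n X (m+n)))"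
      using T K1 by (simp add: mult.assoc mult_left_mono)
    finally show "real (card (lang_n X m)) * real (card (lang_n X n)) \<le> K * real (card (lang_n X (m + n)))" .
  qed
qed

end
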